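(* Let $X$ be a compact metric space, $f\colon X\to X$ continuous, and let $S\in 2^X$ be a periodic point of $2^f$ with fundamental period $k$. Then for every $0<j<k$, $f^j(S)\not\subseteq S$.
   Context: $2^X$ is the space of nonempty closed subsets of $X$ with the Hausdorff metric and $2^f(C)=f(C)$; $f^j(S)=(2^f)^j(S)$. *)

theory Defs
  imports "HOL-Analysis.Analysis"
begin

text \<open>The hyperspace 2^X of a metric space X: nonempty closed subsets of X
(carrying the Hausdorff metric, which plays no role in the statement).\<close>
definition hyperspace :: "'a::metric_space set \<Rightarrow> 'a set set" where
  "hyperspace X = {C. C \<subseteq> X \<and> C \<noteq> {} \<and> closed C}"

definition induced_map :: "('a \<Rightarrow> 'a) \<Rightarrow> 'a set \<Rightarrow> 'a set" where
  "induced_map f C = f ` C"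

definition periodic_with_fundamental_period :: "('b \<Rightarrow> 'b) \<Rightarrow> 'b \<Rightarrow> nat \<Rightarrow> bool" where
  "periodic_with_fundamental_period g S k \<longleftrightarrow>
     0 < k \<and> (g ^^ k) S = S \<and> (\<forall>j. 0 < j \<and> j < k \<longrightarrow> (g ^^ j) S \<noteq> S)"

end

theory Submission
  imports Defs
begin

lemma im_pow_mono: "A \<subseteq> B \<Longrightarrow> (induced_map f ^^ n) A \<subseteq> (induced_map f ^^ n) B"
  by (induction n) (auto simp: induced_map_def)

lemma im_pow_mult_sub:
  assumes "(induced_map f ^^ j) S \<subseteq> S"
  shows "(induced_map f ^^ (m * j)) S \<subseteq> S"
proof (induction m)
  case 0 then show ?case by simp
next
  case (Suc m)
  have "(induced_map f ^^ (Suc m * j)) S = (induced_map f ^^ j) ((induced_map f ^^ (m * j)) S)"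
    by (simp add: funpow_add)
  also have "\<dots> \<subseteq> (induced_map f ^^ j) S" using Suc im_pow_mono by blast
  finally show ?case using assms by blast
qed

lemma im_pow_period:
  assumes "(g ^^ k) S = S"
  shows "(g ^^ (m * k)) S = S"
proof (induction m)
  case 0 then show ?case by simp
next
  case (Suc m)
  have "(g ^^ (Suc m * k)) S = (g ^^ k) ((g ^^ (m * k)) S)"
    by (simp add: funpow_add)
  then show ?case using Suc assms by simp
qed

theorem lemma4p5:
  fixes X :: "'a::metric_space set" and f :: "'a \<Rightarrow> 'a" and S :: "'a set" and k :: nat
  assumes "compact X"
    and "continuous_on X f" and "f ` X \<subseteq> X"
    and "S \<in> hyperspace X"
    and "periodic_with_fundamental_period (induced_map f) S k"
  shows "\<forall>j. 0 < j \<and> j < k \<longrightarrow> \<not> ((induced_map f ^^ j) S \<subseteq> S)"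
proof (intro allI impI notI)
  fix j assume j: "0 < j \<and> j < k" and sub: "(induced_map f ^^ j) S \<subseteq> S"
  let ?g = "induced_map f"
  have per: "(?g ^^ k) S = S" and nf: "(?g ^^ j) S \<noteq> S"
    using assms(5) j unfolding periodic_with_fundamental_period_def by auto
  have "(?g ^^ (j * k)) S = S" using im_pow_period[OF per] .
  moreover have "j * k = j + (k - 1) * j" using j by (cases k) auto
  ultimately have "S = (?g ^^ j) ((?g ^^ ((k - 1) * j)) S)"
    by (simp add: funpow_add)
  also have "\<dots> \<subseteq> (?g ^^ j) S" using im_pow_mult_sub[OF sub] im_pow_mono by blast
  finally show False using sub nf by blast
qed

end
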